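(* Let $\sigma\in\mathcal{OR}_n$, and let $\mathcal L,\mathcal R,\mathcal H,\mathcal J,\mathcal D$ denote Green's relations on the monoid $\mathcal{OR}_n$. Then (i) $\mathcal L(\sigma)=\{\tau\in\mathcal{OR}_n: I(\tau)=I(\sigma)\}$; (ii) $\mathcal R(\sigma)=\{\tau\in\mathcal{OR}_n: J(\tau)=J(\sigma)\}$; (iii) $\mathcal H(\sigma)=\{\tau\in\mathcal{OR}_n: I(\tau)=I(\sigma)\text{ and } J(\tau)=J(\sigma)\}$; (iv) $\mathcal J(\sigma)=\{\tau\in\mathcal{OR}_n:\mathrm{rk}(\tau)=\mathrm{rk}(\sigma), \text{ and } \mathrm{tp}(\tau)=\mathrm{tp}(\sigma)\text{ if }\mathrm{rk}(\sigma)=m\}$; (v) $\mathcal D(\sigma)=\mathcal J(\sigma)$.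
   Context: Let $m\ge 1$, $n=2m$, $\mathbf n=\{1,\dots,n\}$, $\theta(i)=n+1-i$, written $\bar i$. A proper subset $I\subset\mathbf n$ is admissible if $I\cap\theta(I)=\emptyset$; $\mathbf n$ and $\emptyset$ are also admissible. For an injective partial map $\sigma$ of $\mathbf n$, $I(\sigma)$ is its domain, $J(\sigma)$ its image, $\mathrm{rk}(\sigma)=|I(\sigma)|$; products are compositions of partial maps. $W=\{\sigma\in S_n:\sigma(\bar i)=\overline{\sigma(i)}\ \forall i\}$, $W'=\{\sigma\in W:|\sigma(\{1,\dots,m\})\cap\{m+1,\dots,n\}|\text{ even}\}$. An admissible $m$-subset is of type I if it contains an even number of elements $>m$, type II otherwise. $\mathcal{OR}_n$ consists of the injective partial maps $\sigma$ with: $\mathrm{rk}(\sigma)<m$ and $I(\sigma),J(\sigma)$ admissible; or $\mathrm{rk}(\sigma)=m$ and $I(\sigma),J(\sigma)$ admissible of the same type; or $\sigma\in W'$. For $\mathrm{rk}(\sigma)=m$, $\mathrm{tp}(\sigma)$ is the type of $I(\sigma)$. For a Green relation $\mathcal K$, $\mathcal K(\sigma)$ denotes the class of $\sigma$. *)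

theory Defs
  imports Main
begin

text \<open>The product sigma tau is the composition sigma \<circ>m tau (apply tau first), so that
  the domain of a left multiple rho sigma is contained in the domain of sigma.\<close>

definition theta :: "nat \<Rightarrow> nat \<Rightarrow> nat" where
  "theta n i = n + 1 - i"

definition admissible :: "nat \<Rightarrow> nat set \<Rightarrow> bool" where
  "admissible n I \<longleftrightarrow> I \<subseteq> {1..n} \<and> (I = {1..n} \<or> I \<inter> theta n ` I = {})"

definition pinj :: "nat \<Rightarrow> (nat \<rightharpoonup> nat) \<Rightarrow> bool" where
  "pinj n \<sigma> \<longleftrightarrow> dom \<sigma> \<subseteq> {1..n} \<and> ran \<sigma> \<subseteq> {1..n} \<and> inj_on \<sigma> (dom \<sigma>)"

definition Idom :: "(nat \<rightharpoonup> nat) \<Rightarrow> nat set" where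
  "Idom \<sigma> = dom \<sigma>"

definition Jim :: "(nat \<rightharpoonup> nat) \<Rightarrow> nat set" where
  "Jim \<sigma> = ran \<sigma>"

definition rk :: "(nat \<rightharpoonup> nat) \<Rightarrow> nat" where
  "rk \<sigma> = card (dom \<sigma>)"

definition Wgrp :: "nat \<Rightarrow> (nat \<rightharpoonup> nat) set" where
  "Wgrp n = {\<sigma>. pinj n \<sigma> \<and> dom \<sigma> = {1..n} \<and> ran \<sigma> = {1..n} \<and>
     (\<forall>i\<in>{1..n}. \<sigma> (theta n i) = map_option (theta n) (\<sigma> i))}"

definition Wprime :: "nat \<Rightarrow> (nat \<rightharpoonup> nat) set" where
  "Wprime n = {\<sigma> \<in> Wgrp n.
     even (card ((\<lambda>i. the (\<sigma> i)) ` {1..n div 2} \<inter> {n div 2 + 1..n}))}"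

definition typeI :: "nat \<Rightarrow> nat set \<Rightarrow> bool" where
  "typeI n I \<longleftrightarrow> even (card {x \<in> I. x > n div 2})"

definition tp :: "nat \<Rightarrow> (nat \<rightharpoonup> nat) \<Rightarrow> bool" where
  "tp n \<sigma> = typeI n (Idom \<sigma>)"

definition ORn :: "nat \<Rightarrow> (nat \<rightharpoonup> nat) set" where
  "ORn n = {\<sigma>. pinj n \<sigma> \<and>
     ((rk \<sigma> < n div 2 \<and> admissible n (Idom \<sigma>) \<and> admissible n (Jim \<sigma>))
      \<or> (rk \<sigma> = n div 2 \<and> admissible n (Idom \<sigma>) \<and> admissible n (Jim \<sigma>)
           \<and> (typeI n (Idom \<sigma>) \<longleftrightarrow> typeI n (Jim \<sigma>)))
      \<or> \<sigma> \<in> Wprime n)}"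

definition greenL :: "'a set \<Rightarrow> ('a \<Rightarrow> 'a \<Rightarrow> 'a) \<Rightarrow> 'a \<Rightarrow> 'a \<Rightarrow> bool" where
  "greenL M mult x y \<longleftrightarrow> x \<in> M \<and> y \<in> M \<and>
     (\<exists>a\<in>M. \<exists>b\<in>M. x = mult a y \<and> y = mult b x)"

definition greenR :: "'a set \<Rightarrow> ('a \<Rightarrow> 'a \<Rightarrow> 'a) \<Rightarrow> 'a \<Rightarrow> 'a \<Rightarrow> bool" where
  "greenR M mult x y \<longleftrightarrow> x \<in> M \<and> y \<in> M \<and>
     (\<exists>a\<in>M. \<exists>b\<in>M. x = mult y a \<and> y = mult x b)"

definition greenH :: "'a set \<Rightarrow> ('a \<Rightarrow> 'a \<Rightarrow> 'a) \<Rightarrow> 'a \<Rightarrow> 'a \<Rightarrow> bool" where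
  "greenH M mult x y \<longleftrightarrow> greenL M mult x y \<and> greenR M mult x y"

definition greenJ :: "'a set \<Rightarrow> ('a \<Rightarrow> 'a \<Rightarrow> 'a) \<Rightarrow> 'a \<Rightarrow> 'a \<Rightarrow> bool" where
  "greenJ M mult x y \<longleftrightarrow> x \<in> M \<and> y \<in> M \<and>
     (\<exists>a\<in>M. \<exists>b\<in>M. \<exists>c\<in>M. \<exists>d\<in>M. x = mult (mult a y) b \<and> y = mult (mult c x) d)"

definition greenD :: "'a set \<Rightarrow> ('a \<Rightarrow> 'a \<Rightarrow> 'a) \<Rightarrow> 'a \<Rightarrow> 'a \<Rightarrow> bool" where
  "greenD M mult x y \<longleftrightarrow> (\<exists>z. greenL M mult x z \<and> greenR M mult z y)"

definition green_class :: "('a \<Rightarrow> 'a \<Rightarrow> bool) \<Rightarrow> 'a \<Rightarrow> 'a set" where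
  "green_class K x = {y. K y x}"

end

theory Submission
  imports Defs
begin


lemma theta_in: "i \<in> {1..n} \<Longrightarrow> theta n i \<in> {1..n}"
  by (auto simp: theta_def)
lemma theta_theta: "i \<in> {1..n} \<Longrightarrow> theta n (theta n i) = i"
  by (auto simp: theta_def)
lemma theta_inj: "i \<in> {1..n} \<Longrightarrow> j \<in> {1..n} \<Longrightarrow> theta n i = theta n j \<Longrightarrow> i = j"
  by (auto simp: theta_def)

definition eps :: "nat \<Rightarrow> nat \<Rightarrow> int" where
  "eps m x = (if m < x then -1 else 1)"

definition Pm :: "nat \<Rightarrow> nat set \<Rightarrow> int" where
  "Pm m A = prod (eps m) A"

lemma eps_sq: "eps m x * eps m x = 1" by (simp add: eps_def)

lemma eps_theta: "n = 2*m \<Longrightarrow> x \<in> {1..n} \<Longrightarrow> eps m (theta n x) = - eps m x"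
  by (auto simp: eps_def theta_def)

lemma P_card: "finite A \<Longrightarrow> Pm m A = (-1) ^ card {x\<in>A. m < x}"
proof -
  assume f: "finite A"
  have "Pm m A = prod (\<lambda>x. if m < x then -1 else 1) A" by (simp add: Pm_def eps_def)
  also have "\<dots> = prod (\<lambda>x. -1) {x\<in>A. m < x}" by (rule prod.inter_filter[OF f, symmetric])
  also have "\<dots> = (-1) ^ card {x\<in>A. m < x}" by (rule prod_constant)
  finally show ?thesis .
qed

lemma P_even: "finite A \<Longrightarrow> (Pm m A = 1) \<longleftrightarrow> even (card {x\<in>A. m < x})"
  by (simp add: P_card minus_one_power_iff)

lemma P_low: "Pm m {1..m} = 1"
  by (simp add: Pm_def eps_def)

lemma typeI_P: "n = 2*m \<Longrightarrow> finite I \<Longrightarrow> typeI n I \<longleftrightarrow> Pm m I = 1"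
  by (simp add: typeI_def P_even)

definition tot :: "nat \<Rightarrow> (nat \<Rightarrow> nat) \<Rightarrow> (nat \<rightharpoonup> nat)" where
  "tot n f = (\<lambda>i. if i \<in> {1..n} then Some (f i) else None)"

definition Wfun :: "nat \<Rightarrow> (nat \<Rightarrow> nat) \<Rightarrow> bool" where
  "Wfun n f \<longleftrightarrow> bij_betw f {1..n} {1..n} \<and> (\<forall>i\<in>{1..n}. f (theta n i) = theta n (f i))"

lemma Wgrp_tot: assumes "w \<in> Wgrp n"
  shows "Wfun n (\<lambda>i. the (w i)) \<and> w = tot n (\<lambda>i. the (w i))"
proof -
  from assms have p: "pinj n w" and d: "dom w = {1..n}" and r: "ran w = {1..n}"
    and t: "\<forall>i\<in>{1..n}. w (theta n i) = map_option (theta n) (w i)"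
    by (auto simp: Wgrp_def)
  have eq: "w = tot n (\<lambda>i. the (w i))"
  proof
    fix i show "w i = tot n (\<lambda>i. the (w i)) i"
      using d unfolding tot_def by (auto simp: dom_def set_eq_iff)
  qed
  have inj: "inj_on (\<lambda>i. the (w i)) {1..n}"
  proof (rule inj_onI)
    fix i j assume "i \<in> {1..n}" "j \<in> {1..n}" "the (w i) = the (w j)"
    then have "w i = w j" using d by (metis domIff option.expand)
    moreover have "inj_on w (dom w)" using p by (simp add: pinj_def)
    ultimately show "i = j" using d \<open>i \<in> {1..n}\<close> \<open>j \<in> {1..n}\<close> inj_onD by metis
  qed
  have img: "(\<lambda>i. the (w i)) ` {1..n} = {1..n}"
  proof -
    have "(\<lambda>i. the (w i)) ` {1..n} = ran w"
    proof
      show "(\<lambda>i. the (w i)) ` {1..n} \<subseteq> ran w"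
      proof
        fix b assume "b \<in> (\<lambda>i. the (w i)) ` {1..n}"
        then obtain i where i: "i \<in> {1..n}" "b = the (w i)" by blast
        then have "w i = Some b" using d by (metis domIff option.collapse)
        then show "b \<in> ran w" by (simp add: ranI)
      qed
      show "ran w \<subseteq> (\<lambda>i. the (w i)) ` {1..n}"
      proof
        fix b assume "b \<in> ran w"
        then obtain i where "w i = Some b" by (auto simp: ran_def)
        moreover then have "i \<in> {1..n}" using d by (metis domI)
        ultimately show "b \<in> (\<lambda>i. the (w i)) ` {1..n}" by force
      qed
    qed
    then show ?thesis using r by simp
  qed
  have th: "\<forall>i\<in>{1..n}. the (w (theta n i)) = theta n (the (w i))"
  proof
    fix i assume i: "i \<in> {1..n}"
    then obtain y where "w i = Some y" using d by (metis domD)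
    then show "the (w (theta n i)) = theta n (the (w i))" using t i by simp
  qed
  show ?thesis using eq inj img th by (auto simp: Wfun_def bij_betw_def)
qed

lemma tot_Wgrp: assumes "Wfun n f" shows "tot n f \<in> Wgrp n"
proof -
  have b: "bij_betw f {1..n} {1..n}" and t: "\<forall>i\<in>{1..n}. f (theta n i) = theta n (f i)"
    using assms by (auto simp: Wfun_def)
  have d: "dom (tot n f) = {1..n}" by (auto simp: tot_def split: if_splits)
  have r: "ran (tot n f) = {1..n}"
  proof -
    have "ran (tot n f) = f ` {1..n}" by (auto simp: tot_def ran_def split: if_splits)
    then show ?thesis using b by (simp add: bij_betw_def)
  qed
  have i: "inj_on (tot n f) (dom (tot n f))"
  proof (rule inj_onI)
    fix i j assume "i \<in> dom (tot n f)" "j \<in> dom (tot n f)" "tot n f i = tot n f j"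
    then have "i \<in> {1..n}" "j \<in> {1..n}" "f i = f j" using d by (auto simp: tot_def)
    then show "i = j" using b by (metis bij_betw_def inj_onD)
  qed
  have tt: "\<forall>i\<in>{1..n}. tot n f (theta n i) = map_option (theta n) (tot n f i)"
  proof
    fix i assume "i \<in> {1..n}"
    then show "tot n f (theta n i) = map_option (theta n) (tot n f i)"
      using t theta_in[of i n] by (simp add: tot_def)
  qed
  show ?thesis using d r i tt unfolding Wgrp_def pinj_def by simp
qed



definition hmin :: "nat \<Rightarrow> nat \<Rightarrow> nat" where "hmin n x = min x (theta n x)"

lemma key:
  assumes W: "Wfun n f" and nm: "n = 2*m" and I: "I \<subseteq> {1..n}" "I \<inter> theta n ` I = {}" "card I = m"
  shows "f ` I \<subseteq> {1..n} \<and> f ` I \<inter> theta n ` (f ` I) = {} \<and> card (f ` I) = m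
     \<and> Pm m (f ` I) = Pm m (f ` {1..m}) * Pm m I"
proof -
  have b: "bij_betw f {1..n} {1..n}" and t: "\<forall>i\<in>{1..n}. f (theta n i) = theta n (f i)"
    using W by (auto simp: Wfun_def)
  have injn: "inj_on f {1..n}" using b by (simp add: bij_betw_def)
  have injI: "inj_on f I" using injn I(1) by (rule inj_on_subset)
  have fin: "finite I" using I(1) finite_subset by blast
  have s1: "f ` I \<subseteq> {1..n}" using b I(1) by (auto simp: bij_betw_def)
  have s2: "f ` I \<inter> theta n ` (f ` I) = {}"
  proof (rule ccontr)
    assume "f ` I \<inter> theta n ` (f ` I) \<noteq> {}"
    then obtain x y where xy: "x \<in> I" "y \<in> I" "f x = theta n (f y)" by blast
    then have "f x = f (theta n y)" using t I(1) by auto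
    then have "x = theta n y" using injn xy I(1) theta_in by (meson inj_onD subsetD)
    then show False using xy I(2) by blast
  qed
  have s3: "card (f ` I) = m" using card_image[OF injI] I(3) by simp
  define g where "g x = eps m (f x) * eps m x" for x
  have gth: "g (theta n x) = g x" if "x \<in> {1..n}" for x
  proof -
    have "f x \<in> {1..n}" using b that by (auto simp: bij_betw_def)
    then show ?thesis using that t eps_theta[OF nm] theta_in by (simp add: g_def)
  qed
  have hI: "hmin n x \<in> {1..m}" if "x \<in> {1..n}" for x
    using that nm by (auto simp: hmin_def theta_def)
  have gh: "g (hmin n x) = g x" if "x \<in> {1..n}" for x
    using gth[OF that] by (cases "x \<le> theta n x") (auto simp: hmin_def min_def)
  have hinj: "inj_on (hmin n) I"
  proof (rule inj_onI)
    fix x y assume xy: "x \<in> I" "y \<in> I" "hmin n x = hmin n y"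
    have xn: "x \<in> {1..n}" "y \<in> {1..n}" using xy I(1) by auto
    have "x = y \<or> x = theta n y \<or> theta n x = y \<or> theta n x = theta n y"
      using xy(3) by (auto simp: hmin_def min_def split: if_splits)
    moreover have "x \<noteq> theta n y" using xy I(2) by blast
    moreover have "theta n x \<noteq> y" using xy I(2) by blast
    ultimately show "x = y" using theta_inj xn by blast
  qed
  have himg: "hmin n ` I = {1..m}"
  proof (rule card_subset_eq)
    show "finite {1..m}" by simp
    show "hmin n ` I \<subseteq> {1..m}" using hI I(1) by blast
    show "card (hmin n ` I) = card {1..m}" using card_image[OF hinj] I(3) by simp
  qed
  have "prod g {1..m} = prod g (hmin n ` I)" using himg by simp
  also have "\<dots> = prod (g \<circ> hmin n) I" by (rule prod.reindex[OF hinj])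
  also have "\<dots> = prod g I" using gh I(1) by (intro prod.cong) auto
  finally have pg: "prod g {1..m} = prod g I" .
  have "prod g {1..m} = prod (\<lambda>x. eps m (f x)) {1..m}"
    by (intro prod.cong) (auto simp: g_def eps_def)
  also have "\<dots> = Pm m (f ` {1..m})"
  proof -
    have "inj_on f {1..m}" by (rule inj_on_subset[OF injn]) (use nm in auto)
    then show ?thesis by (simp add: Pm_def prod.reindex)
  qed
  finally have pg2: "prod g I = Pm m (f ` {1..m})" using pg by simp
  have "Pm m (f ` I) = prod (\<lambda>x. eps m (f x)) I"
    using injI by (simp add: Pm_def prod.reindex)
  also have "\<dots> = prod (\<lambda>x. g x * eps m x) I"
    by (intro prod.cong) (auto simp: g_def eps_def)
  also have "\<dots> = prod g I * Pm m I" by (simp add: Pm_def prod.distrib)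
  finally have "Pm m (f ` I) = Pm m (f ` {1..m}) * Pm m I" using pg2 by simp
  then show ?thesis using s1 s2 s3 by blast
qed

lemma low_adm: "n = 2*m \<Longrightarrow> {1..m} \<subseteq> {1..n} \<and> {1..m} \<inter> theta n ` {1..m} = {} \<and> card {1..m} = m"
  by (auto simp: theta_def)

lemma Wfun_comp: assumes "Wfun n f" "Wfun n g" shows "Wfun n (f \<circ> g)"
proof -
  have bf: "bij_betw f {1..n} {1..n}" and tf: "\<forall>i\<in>{1..n}. f (theta n i) = theta n (f i)"
    and bg: "bij_betw g {1..n} {1..n}" and tg: "\<forall>i\<in>{1..n}. g (theta n i) = theta n (g i)"
    using assms by (auto simp: Wfun_def)
  have "bij_betw (f \<circ> g) {1..n} {1..n}" using bij_betw_trans[OF bg bf] .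
  moreover have "\<forall>i\<in>{1..n}. (f \<circ> g) (theta n i) = theta n ((f \<circ> g) i)"
  proof
    fix i assume i: "i \<in> {1..n}"
    then have "g i \<in> {1..n}" using bg by (auto simp: bij_betw_def)
    then show "(f \<circ> g) (theta n i) = theta n ((f \<circ> g) i)" using i tf tg by simp
  qed
  ultimately show ?thesis by (simp add: Wfun_def)
qed

lemma Wfun_inv: assumes "Wfun n f" shows "Wfun n (the_inv_into {1..n} f)"
proof -
  have b: "bij_betw f {1..n} {1..n}" and t: "\<forall>i\<in>{1..n}. f (theta n i) = theta n (f i)"
    using assms by (auto simp: Wfun_def)
  let ?g = "the_inv_into {1..n} f"
  have bg: "bij_betw ?g {1..n} {1..n}" using b by (rule bij_betw_the_inv_into)
  have "?g (theta n j) = theta n (?g j)" if j: "j \<in> {1..n}" for j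
  proof -
    have gj: "?g j \<in> {1..n}" "f (?g j) = j" using bg b j
      by (auto simp: bij_betw_def f_the_inv_into_f)
    have "f (theta n (?g j)) = theta n j" using t gj by simp
    moreover have "theta n (?g j) \<in> {1..n}" using gj theta_in by blast
    ultimately show ?thesis using b by (metis bij_betw_def the_inv_into_f_f)
  qed
  then show ?thesis using bg by (simp add: Wfun_def)
qed

definition Wp :: "nat \<Rightarrow> nat \<Rightarrow> (nat \<Rightarrow> nat) \<Rightarrow> bool" where
  "Wp m n f \<longleftrightarrow> Wfun n f \<and> Pm m (f ` {1..m}) = 1"

lemma Wp_comp: assumes "n = 2*m" "Wp m n f" "Wp m n g" shows "Wp m n (f \<circ> g)"
proof -
  have a: "g ` {1..m} \<subseteq> {1..n} \<and> g ` {1..m} \<inter> theta n ` (g ` {1..m}) = {} \<and> card (g ` {1..m}) = m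
     \<and> Pm m (g ` {1..m}) = Pm m (g ` {1..m}) * Pm m {1..m}"
    using key[of n g m "{1..m}"] low_adm[OF assms(1)] assms by (auto simp: Wp_def)
  have "Pm m (f ` (g ` {1..m})) = Pm m (f ` {1..m}) * Pm m (g ` {1..m})"
    using key[of n f m "g ` {1..m}"] a assms by (auto simp: Wp_def)
  then show ?thesis using assms Wfun_comp by (auto simp: Wp_def image_comp)
qed

lemma Wp_inv: assumes "n = 2*m" "Wp m n f" shows "Wp m n (the_inv_into {1..n} f)"
proof -
  let ?g = "the_inv_into {1..n} f"
  have Wf: "Wfun n f" using assms by (simp add: Wp_def)
  have Wg: "Wfun n ?g" using Wfun_inv Wf by blast
  have a: "?g ` {1..m} \<subseteq> {1..n} \<and> ?g ` {1..m} \<inter> theta n ` (?g ` {1..m}) = {} \<and> card (?g ` {1..m}) = m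
     \<and> Pm m (?g ` {1..m}) = Pm m (?g ` {1..m}) * Pm m {1..m}"
    using key[of n ?g m "{1..m}"] low_adm[OF assms(1)] Wg assms(1) by auto
  have "Pm m (f ` (?g ` {1..m})) = Pm m (f ` {1..m}) * Pm m (?g ` {1..m})"
    using key[of n f m "?g ` {1..m}"] a assms Wf by auto
  moreover have "f ` (?g ` {1..m}) = {1..m}"
  proof -
    have "bij_betw f {1..n} {1..n}" using Wf by (simp add: Wfun_def)
    then have "\<forall>j\<in>{1..m}. f (?g j) = j" using assms(1) by (auto simp: f_the_inv_into_f bij_betw_def)
    then show ?thesis by (simp add: image_image)
  qed
  ultimately show ?thesis using assms Wg P_low by (simp add: Wp_def)
qed

lemma Wprime_iff: assumes "n = 2*m" shows "w \<in> Wprime n \<longleftrightarrow> (\<exists>f. Wp m n f \<and> w = tot n f)"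
proof
  assume w: "w \<in> Wprime n"
  then have wg: "w \<in> Wgrp n" by (simp add: Wprime_def)
  let ?f = "\<lambda>i. the (w i)"
  have Wf: "Wfun n ?f" and eq: "w = tot n ?f" using Wgrp_tot[OF wg] by auto
  have sub: "?f ` {1..m} \<subseteq> {1..n}" using Wf assms by (auto simp: Wfun_def bij_betw_def)
  have "?f ` {1..m} \<inter> {m+1..n} = {x \<in> ?f ` {1..m}. m < x}" using sub by auto
  moreover have "even (card (?f ` {1..m} \<inter> {m+1..n}))" using w assms by (simp add: Wprime_def)
  ultimately have "Pm m (?f ` {1..m}) = 1" by (simp add: P_even)
  then show "\<exists>f. Wp m n f \<and> w = tot n f" using Wf eq by (auto simp: Wp_def)
next
  assume "\<exists>f. Wp m n f \<and> w = tot n f"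
  then obtain f where f: "Wp m n f" "w = tot n f" by blast
  have wg: "w \<in> Wgrp n" using f tot_Wgrp by (simp add: Wp_def)
  have fe: "(\<lambda>i. the (w i)) ` {1..m} = f ` {1..m}" using f(2) assms by (auto simp: tot_def)
  have sub: "f ` {1..m} \<subseteq> {1..n}" using f assms by (auto simp: Wp_def Wfun_def bij_betw_def)
  have "f ` {1..m} \<inter> {m+1..n} = {x \<in> f ` {1..m}. m < x}" using sub by auto
  then have "even (card (f ` {1..m} \<inter> {m+1..n}))" using f(1) by (simp add: P_even Wp_def)
  then show "w \<in> Wprime n" using wg fe assms by (simp add: Wprime_def)
qed



definition minv :: "(nat \<rightharpoonup> nat) \<Rightarrow> (nat \<rightharpoonup> nat)" where
  "minv y = (\<lambda>j. if j \<in> ran y then Some (THE i. y i = Some j) else None)"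

lemma inj_map_eq: "inj_on y (dom y) \<Longrightarrow> y i = Some j \<Longrightarrow> y i' = Some j \<Longrightarrow> i = i'"
  by (metis domI inj_onD)

lemma minv_Some: assumes "inj_on y (dom y)" "y i = Some j" shows "minv y j = Some i"
proof -
  have "j \<in> ran y" using assms(2) by (auto simp: ran_def)
  moreover have "(THE i. y i = Some j) = i"
    using assms by (intro the_equality) (auto intro: inj_map_eq)
  ultimately show ?thesis by (simp add: minv_def)
qed

lemma minv_SomeD: assumes "inj_on y (dom y)" "minv y j = Some i" shows "y i = Some j"
proof -
  from assms(2) have "j \<in> ran y" by (auto simp: minv_def split: if_splits)
  then obtain k where k: "y k = Some j" by (auto simp: ran_def)
  then have "minv y j = Some k" using minv_Some[OF assms(1)] by blast
  then show ?thesis using assms(2) k by simp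
qed

lemma minv_None: "j \<notin> ran y \<Longrightarrow> minv y j = None"
  by (simp add: minv_def)

lemma pinj_fin: "pinj n y \<Longrightarrow> finite (dom y)"
  unfolding pinj_def using finite_subset by blast

lemma ran_eq: "ran y = (\<lambda>i. the (y i)) ` dom y"
  by (force simp: ran_def)

lemma pinj_card: assumes "pinj n y" shows "card (ran y) = card (dom y)"
proof -
  have "inj_on (\<lambda>i. the (y i)) (dom y)"
  proof (rule inj_onI)
    fix i j assume "i \<in> dom y" "j \<in> dom y" "the (y i) = the (y j)"
    then have "y i = y j" by (metis domIff option.expand)
    then show "i = j" using assms \<open>i \<in> dom y\<close> \<open>j \<in> dom y\<close> unfolding pinj_def by (metis inj_onD)
  qed
  then show ?thesis by (simp add: ran_eq card_image)
qed

lemma tot_comp: assumes "g ` {1..n} \<subseteq> {1..n}" shows "tot n f \<circ>\<^sub>m tot n g = tot n (f \<circ> g)"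
proof
  fix i show "(tot n f \<circ>\<^sub>m tot n g) i = tot n (f \<circ> g) i"
    using assms by (auto simp: tot_def map_comp_def image_subset_iff)
qed

lemma minv_tot: assumes "bij_betw f {1..n} {1..n}"
  shows "minv (tot n f) = tot n (the_inv_into {1..n} f)"
proof
  fix j
  have inj: "inj_on (tot n f) (dom (tot n f))"
  proof (rule inj_onI)
    fix i j assume "i \<in> dom (tot n f)" "j \<in> dom (tot n f)" "tot n f i = tot n f j"
    then have "i \<in> {1..n}" "j \<in> {1..n}" "f i = f j" by (auto simp: tot_def split: if_splits)
    then show "i = j" using assms by (metis bij_betw_def inj_onD)
  qed
  show "minv (tot n f) j = tot n (the_inv_into {1..n} f) j"
  proof (cases "j \<in> {1..n}")
    case True
    let ?g = "the_inv_into {1..n} f"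
    have "?g j \<in> {1..n}" "f (?g j) = j" using True assms bij_betw_the_inv_into[OF assms]
      by (auto simp: bij_betw_def f_the_inv_into_f)
    then have "tot n f (?g j) = Some j" by (simp add: tot_def)
    then show ?thesis using minv_Some[OF inj] True by (simp add: tot_def)
  next
    case False
    have "j \<notin> ran (tot n f)"
    proof
      assume "j \<in> ran (tot n f)"
      then obtain i where "tot n f i = Some j" by (auto simp: ran_def)
      then have "i \<in> {1..n}" "f i = j" by (auto simp: tot_def split: if_splits)
      then show False using False assms by (auto simp: bij_betw_def)
    qed
    then show ?thesis using False by (simp add: minv_None tot_def)
  qed
qed

lemma ORn_cases:
  assumes nm: "n = 2*m" "m \<ge> 1" and s: "\<sigma> \<in> ORn n"
  shows "pinj n \<sigma> \<and> admissible n (dom \<sigma>) \<and> admissible n (ran \<sigma>) \<and>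
    (rk \<sigma> < m \<or> (rk \<sigma> = m \<and> (typeI n (dom \<sigma>) \<longleftrightarrow> typeI n (ran \<sigma>)))
     \<or> (m < rk \<sigma> \<and> \<sigma> \<in> Wprime n \<and> dom \<sigma> = {1..n} \<and> ran \<sigma> = {1..n}))"
proof -
  have nd: "n div 2 = m" using nm by simp
  have p: "pinj n \<sigma>" using s by (simp add: ORn_def)
  show ?thesis
  proof (cases "\<sigma> \<in> Wprime n")
    case True
    then have d: "dom \<sigma> = {1..n}" "ran \<sigma> = {1..n}" by (auto simp: Wprime_def Wgrp_def)
    then have "rk \<sigma> = n" by (simp add: rk_def)
    then have "m < rk \<sigma>" using nm by simp
    then show ?thesis using p d True by (simp add: admissible_def)
  next
    case False
    have "(rk \<sigma> < m \<and> admissible n (dom \<sigma>) \<and> admissible n (ran \<sigma>))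
      \<or> (rk \<sigma> = m \<and> admissible n (dom \<sigma>) \<and> admissible n (ran \<sigma>)
           \<and> (typeI n (dom \<sigma>) \<longleftrightarrow> typeI n (ran \<sigma>)))"
      using s False nd unfolding ORn_def Idom_def Jim_def by simp
    then show ?thesis using p by blast
  qed
qed

lemma ORn_pinj: "n = 2*m \<Longrightarrow> m \<ge> 1 \<Longrightarrow> \<sigma> \<in> ORn n \<Longrightarrow> pinj n \<sigma>"
  using ORn_cases by blast
lemma ORn_adm: "n = 2*m \<Longrightarrow> m \<ge> 1 \<Longrightarrow> \<sigma> \<in> ORn n \<Longrightarrow> admissible n (dom \<sigma>) \<and> admissible n (ran \<sigma>)"
  using ORn_cases by blast
lemma ORn_m: "n = 2*m \<Longrightarrow> m \<ge> 1 \<Longrightarrow> \<sigma> \<in> ORn n \<Longrightarrow> rk \<sigma> = m \<Longrightarrow> (typeI n (dom \<sigma>) \<longleftrightarrow> typeI n (ran \<sigma>))"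
  using ORn_cases by fastforce
lemma ORn_big: "n = 2*m \<Longrightarrow> m \<ge> 1 \<Longrightarrow> \<sigma> \<in> ORn n \<Longrightarrow> m < rk \<sigma> \<Longrightarrow> \<sigma> \<in> Wprime n \<and> dom \<sigma> = {1..n} \<and> ran \<sigma> = {1..n}"
  using ORn_cases by fastforce

lemma ORn_mk:
  assumes nm: "n = 2*m" "m \<ge> 1" and p: "pinj n a" and ad: "admissible n (dom a)" "admissible n (ran a)"
    and ty: "rk a = m \<Longrightarrow> (typeI n (dom a) \<longleftrightarrow> typeI n (ran a))"
    and w: "m < rk a \<Longrightarrow> a \<in> Wprime n"
  shows "a \<in> ORn n"
proof -
  have nd: "n div 2 = m" using nm by simp
  consider "rk a < m" | "rk a = m" | "m < rk a" by linarith
  then show ?thesis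
    by cases (use p ad ty w nd in \<open>auto simp: ORn_def Idom_def Jim_def\<close>)
qed

lemma adm_m: assumes "n = 2*m" "m \<ge> 1" "admissible n I" "card I = m"
  shows "I \<subseteq> {1..n} \<and> I \<inter> theta n ` I = {} \<and> card I = m"
proof -
  have "I \<noteq> {1..n}"
  proof
    assume "I = {1..n}" then have "card I = n" by simp
    with assms show False by simp
  qed
  then show ?thesis using assms by (auto simp: admissible_def)
qed

lemma Wprime_tot: assumes "n = 2*m" "x \<in> Wprime n"
  obtains f where "Wp m n f" "x = tot n f" "bij_betw f {1..n} {1..n}"
  using assms Wprime_iff[OF assms(1)] by (auto simp: Wp_def Wfun_def)

lemma L_intro:
  assumes nm: "n = 2*m" "m \<ge> 1" and x: "x \<in> ORn n" and y: "y \<in> ORn n" and d: "dom x = dom y"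
  shows "\<exists>a\<in>ORn n. x = a \<circ>\<^sub>m y"
proof -
  have px: "pinj n x" and py: "pinj n y" using ORn_pinj nm x y by blast+
  have ix: "inj_on x (dom x)" and iy: "inj_on y (dom y)" using px py by (auto simp: pinj_def)
  define a where "a = x \<circ>\<^sub>m minv y"
  have eq: "x = a \<circ>\<^sub>m y"
  proof
    fix i show "x i = (a \<circ>\<^sub>m y) i"
    proof (cases "y i")
      case None
      then have "x i = None" using d by (metis domIff)
      then show ?thesis using None by (simp add: map_comp_def)
    next
      case (Some j)
      then show ?thesis using minv_Some[OF iy Some] by (simp add: a_def map_comp_def)
    qed
  qed
  have da: "dom a = ran y"
  proof
    show "dom a \<subseteq> ran y" by (auto simp: a_def map_comp_def minv_def split: option.splits if_splits)
    show "ran y \<subseteq> dom a"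
    proof
      fix j assume "j \<in> ran y"
      then obtain i where yi: "y i = Some j" by (auto simp: ran_def)
      then have "i \<in> dom x" using d by blast
      then show "j \<in> dom a" using minv_Some[OF iy yi] by (auto simp: a_def)
    qed
  qed
  have ra: "ran a = ran x"
  proof
    show "ran a \<subseteq> ran x" by (auto simp: a_def ran_def map_comp_Some_iff)
    show "ran x \<subseteq> ran a"
    proof
      fix k assume "k \<in> ran x"
      then obtain i where xi: "x i = Some k" by (auto simp: ran_def)
      then have "a \<circ>\<^sub>m y = x" using eq by simp
      then show "k \<in> ran a" using xi by (auto simp: ran_def map_comp_Some_iff)
    qed
  qed
  have ia: "inj_on a (dom a)"
  proof (rule inj_onI)
    fix j j' assume "j \<in> dom a" "j' \<in> dom a" "a j = a j'"
    then obtain k where k: "a j = Some k" "a j' = Some k" by auto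
    then obtain i i' where "minv y j = Some i" "x i = Some k" "minv y j' = Some i'" "x i' = Some k"
      by (auto simp: a_def map_comp_Some_iff)
    then have "i = i'" "y i = Some j" "y i' = Some j'" using inj_map_eq[OF ix] minv_SomeD[OF iy] by blast+
    then show "j = j'" by simp
  qed
  have pa: "pinj n a" using da ra ia px py by (simp add: pinj_def)
  have rka: "rk a = rk y" using da pinj_card[OF py] by (simp add: rk_def)
  have rkxy: "rk x = rk y" using d by (simp add: rk_def)
  have "a \<in> ORn n"
  proof (rule ORn_mk[OF nm pa])
    show "admissible n (dom a)" "admissible n (ran a)" using da ra ORn_adm[OF nm x] ORn_adm[OF nm y] by auto
    show "typeI n (dom a) = typeI n (ran a)" if "rk a = m"
      using that rka rkxy ORn_m[OF nm x] ORn_m[OF nm y] da ra d by simp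
    show "a \<in> Wprime n" if "m < rk a"
    proof -
      have "x \<in> Wprime n" "y \<in> Wprime n" using that rka rkxy ORn_big[OF nm x] ORn_big[OF nm y] by auto
      then obtain f g where f: "Wp m n f" "x = tot n f" "bij_betw f {1..n} {1..n}"
        and g: "Wp m n g" "y = tot n g" "bij_betw g {1..n} {1..n}"
        using Wprime_tot[OF nm(1)] by metis
      let ?g = "the_inv_into {1..n} g"
      have "a = tot n (f \<circ> ?g)"
        unfolding a_def f(2) g(2) minv_tot[OF g(3)]
        by (rule tot_comp) (use bij_betw_the_inv_into[OF g(3)] in \<open>auto simp: bij_betw_def\<close>)
      moreover have "Wp m n (f \<circ> ?g)" using Wp_comp[OF nm(1) f(1) Wp_inv[OF nm(1) g(1)]] .
      ultimately show ?thesis using Wprime_iff[OF nm(1)] by blast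
    qed
  qed
  then show ?thesis using eq by blast
qed



lemma R_intro:
  assumes nm: "n = 2*m" "m \<ge> 1" and x: "x \<in> ORn n" and y: "y \<in> ORn n" and r: "ran x = ran y"
  shows "\<exists>a\<in>ORn n. x = y \<circ>\<^sub>m a"
proof -
  have px: "pinj n x" and py: "pinj n y" using ORn_pinj nm x y by blast+
  have ix: "inj_on x (dom x)" and iy: "inj_on y (dom y)" using px py by (auto simp: pinj_def)
  define a where "a = minv y \<circ>\<^sub>m x"
  have eq: "x = y \<circ>\<^sub>m a"
  proof
    fix i show "x i = (y \<circ>\<^sub>m a) i"
    proof (cases "x i")
      case None
      then show ?thesis by (simp add: a_def map_comp_def)
    next
      case (Some k)
      then have "k \<in> ran y" using r by (auto simp: ran_def)
      then obtain j where yj: "y j = Some k" by (auto simp: ran_def)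
      then show ?thesis using minv_Some[OF iy yj] Some by (simp add: a_def map_comp_def)
    qed
  qed
  have da: "dom a = dom x"
  proof
    show "dom a \<subseteq> dom x" by (auto simp: a_def map_comp_def split: option.splits)
    show "dom x \<subseteq> dom a"
    proof
      fix i assume "i \<in> dom x"
      then obtain k where xi: "x i = Some k" by auto
      then have "k \<in> ran y" using r by (auto simp: ran_def)
      then obtain j where yj: "y j = Some k" by (auto simp: ran_def)
      then show "i \<in> dom a" using minv_Some[OF iy yj] xi by (auto simp: a_def)
    qed
  qed
  have ra: "ran a = dom y"
  proof
    show "ran a \<subseteq> dom y"
    proof
      fix j assume "j \<in> ran a"
      then obtain i where "a i = Some j" by (auto simp: ran_def)
      then obtain k where "x i = Some k" "minv y k = Some j" by (auto simp: a_def map_comp_Some_iff)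
      then show "j \<in> dom y" using minv_SomeD[OF iy] by blast
    qed
    show "dom y \<subseteq> ran a"
    proof
      fix j assume "j \<in> dom y"
      then obtain k where yj: "y j = Some k" by auto
      then have "k \<in> ran x" using r by (auto simp: ran_def)
      then obtain i where xi: "x i = Some k" by (auto simp: ran_def)
      then have "a i = Some j" using minv_Some[OF iy yj] by (simp add: a_def)
      then show "j \<in> ran a" by (simp add: ranI)
    qed
  qed
  have ia: "inj_on a (dom a)"
  proof (rule inj_onI)
    fix i i' assume "i \<in> dom a" "i' \<in> dom a" "a i = a i'"
    then obtain j where "a i = Some j" "a i' = Some j" by auto
    then obtain k k' where kk: "x i = Some k" "minv y k = Some j" "x i' = Some k'" "minv y k' = Some j"
      by (auto simp: a_def map_comp_Some_iff)
    then have "y j = Some k" "y j = Some k'" using minv_SomeD[OF iy] by blast+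
    then have "k = k'" by simp
    then show "i = i'" using kk inj_map_eq[OF ix] by blast
  qed
  have pa: "pinj n a" using da ra ia px py by (simp add: pinj_def)
  have rka: "rk a = rk x" using da by (simp add: rk_def)
  have rkxy: "rk x = rk y" using r pinj_card[OF px] pinj_card[OF py] by (simp add: rk_def)
  have "a \<in> ORn n"
  proof (rule ORn_mk[OF nm pa])
    show "admissible n (dom a)" "admissible n (ran a)" using da ra ORn_adm[OF nm x] ORn_adm[OF nm y] by auto
    show "typeI n (dom a) = typeI n (ran a)" if "rk a = m"
      using that rka rkxy ORn_m[OF nm x] ORn_m[OF nm y] da ra r by simp
    show "a \<in> Wprime n" if "m < rk a"
    proof -
      have "x \<in> Wprime n" "y \<in> Wprime n" using that rka rkxy ORn_big[OF nm x] ORn_big[OF nm y] by auto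
      then obtain f g where f: "Wp m n f" "x = tot n f" "bij_betw f {1..n} {1..n}"
        and g: "Wp m n g" "y = tot n g" "bij_betw g {1..n} {1..n}"
        using Wprime_tot[OF nm(1)] by metis
      let ?g = "the_inv_into {1..n} g"
      have "a = tot n (?g \<circ> f)"
        unfolding a_def f(2) g(2) minv_tot[OF g(3)]
        by (rule tot_comp) (use f(3) in \<open>auto simp: bij_betw_def\<close>)
      moreover have "Wp m n (?g \<circ> f)" using Wp_comp[OF nm(1) Wp_inv[OF nm(1) g(1)] f(1)] .
      ultimately show ?thesis using Wprime_iff[OF nm(1)] by blast
    qed
  qed
  then show ?thesis using eq by blast
qed

lemma mk_bij_map:
  assumes "A \<subseteq> {1..n}" "B \<subseteq> {1..n}" "card A = card B"
  obtains z where "pinj n z" "dom z = A" "ran z = B"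
proof -
  have fa: "finite A" "finite B" using assms finite_subset by blast+
  obtain h where h: "bij_betw h A B" using finite_same_card_bij[OF fa assms(3)] by blast
  define z where "z = (\<lambda>i. if i \<in> A then Some (h i) else None)"
  have d: "dom z = A" by (auto simp: z_def split: if_splits)
  have r: "ran z = B"
  proof -
    have "ran z = h ` A" by (auto simp: z_def ran_def split: if_splits)
    then show ?thesis using h by (simp add: bij_betw_def)
  qed
  have i: "inj_on z (dom z)"
  proof (rule inj_onI)
    fix i j assume "i \<in> dom z" "j \<in> dom z" "z i = z j"
    then have "i \<in> A" "j \<in> A" "h i = h j" using d by (auto simp: z_def)
    then show "i = j" using h by (metis bij_betw_def inj_onD)
  qed
  have "pinj n z" using d r i assms by (simp add: pinj_def)
  then show ?thesis using that d r by blast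
qed



lemma dom_comp_sub: "dom (f \<circ>\<^sub>m g) \<subseteq> dom g"
  by (auto simp: map_comp_def split: option.splits)

lemma ran_comp_sub: "ran (f \<circ>\<^sub>m g) \<subseteq> ran f"
  by (auto simp: ran_def map_comp_Some_iff)

lemma rk_left: "finite (dom y) \<Longrightarrow> rk (a \<circ>\<^sub>m y) \<le> rk y"
  unfolding rk_def using dom_comp_sub by (metis card_mono)

lemma rk_right: assumes "finite (dom c)" "inj_on b (dom b)" shows "rk (c \<circ>\<^sub>m b) \<le> rk c"
proof -
  let ?bf = "\<lambda>i. the (b i)"
  have "inj_on ?bf (dom (c \<circ>\<^sub>m b))"
  proof (rule inj_onI)
    fix i j assume "i \<in> dom (c \<circ>\<^sub>m b)" "j \<in> dom (c \<circ>\<^sub>m b)" "?bf i = ?bf j"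
    then have "i \<in> dom b" "j \<in> dom b" "?bf i = ?bf j" using dom_comp_sub[of c b] by auto
    then have "b i = b j" by (metis domIff option.expand)
    then show "i = j" using assms(2) \<open>i \<in> dom b\<close> \<open>j \<in> dom b\<close> by (metis inj_onD)
  qed
  moreover have "?bf ` dom (c \<circ>\<^sub>m b) \<subseteq> dom c"
    by (auto simp: map_comp_def split: option.splits)
  ultimately show ?thesis unfolding rk_def by (rule card_inj_on_le[OF _ _ assms(1)])
qed

lemma J_type:
  assumes nm: "n = 2*m" "m \<ge> 1" and x: "x \<in> ORn n" and y: "y \<in> ORn n" and b: "b \<in> ORn n"
    and dc: "dom c \<subseteq> dom y" and xe: "x = c \<circ>\<^sub>m b" and rx: "rk x = m" and ry: "rk y = m"
  shows "typeI n (dom x) \<longleftrightarrow> typeI n (dom y)"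
proof -
  have px: "pinj n x" and py: "pinj n y" and pb: "pinj n b" using ORn_pinj nm x y b by blast+
  have ib: "inj_on b (dom b)" using pb by (simp add: pinj_def)
  have fy: "finite (dom y)" and fb: "finite (dom b)" and fx: "finite (dom x)" using pinj_fin px py pb by blast+
  let ?bf = "\<lambda>i. the (b i)"
  have dxb: "dom x \<subseteq> dom b" using xe dom_comp_sub[of c b] by simp
  have bsome: "b i = Some (?bf i)" if "i \<in> dom x" for i using that dxb by auto
  have bimg: "?bf i \<in> dom c" if "i \<in> dom x" for i
    using that xe by (auto simp: map_comp_def split: option.splits)
  have binj: "inj_on ?bf (dom x)"
  proof (rule inj_onI)
    fix i j assume "i \<in> dom x" "j \<in> dom x" "?bf i = ?bf j"
    then have "b i = b j" using bsome by metis
    then show "i = j" using ib dxb \<open>i \<in> dom x\<close> \<open>j \<in> dom x\<close> by (meson inj_onD subsetD)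
  qed
  have img: "?bf ` dom x = dom y"
  proof (rule card_subset_eq[OF fy])
    show "?bf ` dom x \<subseteq> dom y" using bimg dc by blast
    show "card (?bf ` dom x) = card (dom y)" using card_image[OF binj] rx ry by (simp add: rk_def)
  qed
  consider "rk b < m" | "rk b = m" | "m < rk b" by linarith
  then show ?thesis
  proof cases
    case 1
    have "card (dom x) \<le> card (dom b)" using card_mono[OF fb dxb] .
    then show ?thesis using 1 rx by (simp add: rk_def)
  next
    case 2
    have db: "dom b = dom x"
      using card_subset_eq[OF fb dxb] rx 2 by (simp add: rk_def)
    have "ran b = dom y" using ran_eq[of b] db img by simp
    then show ?thesis using ORn_m[OF nm b 2] db by simp
  next
    case 3
    have bw: "b \<in> Wprime n" using ORn_big[OF nm b 3] by blast
    obtain f where f: "Wp m n f" "b = tot n f" "bij_betw f {1..n} {1..n}"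
      using Wprime_tot[OF nm(1) bw] by blast
    have dxn: "dom x \<subseteq> {1..n}" using px by (simp add: pinj_def)
    have fe: "f ` dom x = dom y"
    proof -
      have "\<forall>i\<in>dom x. ?bf i = f i" using dxn f(2) by (auto simp: tot_def)
      then have "f ` dom x = ?bf ` dom x" by (metis (no_types, lifting) image_cong)
      then show ?thesis using img by simp
    qed
    have adx: "dom x \<subseteq> {1..n} \<and> dom x \<inter> theta n ` dom x = {} \<and> card (dom x) = m"
      using adm_m[OF nm] ORn_adm[OF nm x] rx by (simp add: rk_def)
    have "Pm m (f ` dom x) = Pm m (f ` {1..m}) * Pm m (dom x)"
      using key[of n f m "dom x"] f(1) nm(1) adx by (auto simp: Wp_def)
    then have "Pm m (dom y) = Pm m (dom x)" using fe f(1) by (simp add: Wp_def)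
    then show ?thesis using typeI_P[OF nm(1) fx] typeI_P[OF nm(1) fy] by simp
  qed
qed



lemma greenL_E: assumes "greenL M f x y"
  obtains a b where "x\<in>M" "y\<in>M" "a\<in>M" "b\<in>M" "x = f a y" "y = f b x"
  using assms unfolding greenL_def by (elim conjE bexE) (rule that)
lemma greenR_E: assumes "greenR M f x y"
  obtains a b where "x\<in>M" "y\<in>M" "a\<in>M" "b\<in>M" "x = f y a" "y = f x b"
  using assms unfolding greenR_def by (elim conjE bexE) (rule that)
lemma greenJ_E: assumes "greenJ M f x y"
  obtains a b c d where "x\<in>M" "y\<in>M" "a\<in>M" "b\<in>M" "c\<in>M" "d\<in>M" "x = f (f a y) b" "y = f (f c x) d"
  using assms unfolding greenJ_def by (elim conjE bexE) (rule that)
lemma greenL_I: "x\<in>M \<Longrightarrow> y\<in>M \<Longrightarrow> a\<in>M \<Longrightarrow> b\<in>M \<Longrightarrow> x = f a y \<Longrightarrow> y = f b x \<Longrightarrow> greenL M f x y"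
  unfolding greenL_def by (intro conjI bexI)
lemma greenR_I: "x\<in>M \<Longrightarrow> y\<in>M \<Longrightarrow> a\<in>M \<Longrightarrow> b\<in>M \<Longrightarrow> x = f y a \<Longrightarrow> y = f x b \<Longrightarrow> greenR M f x y"
  unfolding greenR_def by (intro conjI bexI)
lemma greenJ_I: "x\<in>M \<Longrightarrow> y\<in>M \<Longrightarrow> a\<in>M \<Longrightarrow> b\<in>M \<Longrightarrow> c\<in>M \<Longrightarrow> d\<in>M \<Longrightarrow> x = f (f a y) b \<Longrightarrow> y = f (f c x) d \<Longrightarrow> greenJ M f x y"
  unfolding greenJ_def by (intro conjI bexI)
lemma green_class_iff: "y \<in> green_class K x \<longleftrightarrow> K y x"
  by (simp add: green_class_def)


lemma L_class:
  assumes nm: "n = 2*m" "m \<ge> 1" and s: "\<sigma> \<in> ORn n"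
  shows "green_class (greenL (ORn n) (\<circ>\<^sub>m)) \<sigma> = {\<tau> \<in> ORn n. Idom \<tau> = Idom \<sigma>}"
proof
  show "green_class (greenL (ORn n) (\<circ>\<^sub>m)) \<sigma> \<subseteq> {\<tau> \<in> ORn n. Idom \<tau> = Idom \<sigma>}"
  proof
    fix \<tau> assume "\<tau> \<in> green_class (greenL (ORn n) (\<circ>\<^sub>m)) \<sigma>"
    then have "greenL (ORn n) (\<circ>\<^sub>m) \<tau> \<sigma>" by (simp only: green_class_iff)
    then obtain a b where t: "\<tau> \<in> ORn n" and e1: "\<tau> = a \<circ>\<^sub>m \<sigma>" and e2: "\<sigma> = b \<circ>\<^sub>m \<tau>"
      by (rule greenL_E)
    have "dom \<tau> \<subseteq> dom \<sigma>" using e1 dom_comp_sub[of a \<sigma>] by simp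
    moreover have "dom \<sigma> \<subseteq> dom \<tau>" using e2 dom_comp_sub[of b \<tau>] by simp
    ultimately show "\<tau> \<in> {\<tau> \<in> ORn n. Idom \<tau> = Idom \<sigma>}" using t by (simp add: Idom_def)
  qed
  show "{\<tau> \<in> ORn n. Idom \<tau> = Idom \<sigma>} \<subseteq> green_class (greenL (ORn n) (\<circ>\<^sub>m)) \<sigma>"
  proof
    fix \<tau> assume "\<tau> \<in> {\<tau> \<in> ORn n. Idom \<tau> = Idom \<sigma>}"
    then have t: "\<tau> \<in> ORn n" and d: "dom \<tau> = dom \<sigma>" by (auto simp: Idom_def)
    obtain a where ha: "a \<in> ORn n" "\<tau> = a \<circ>\<^sub>m \<sigma>" using L_intro[OF nm t s d] by blast
    obtain b where hb: "b \<in> ORn n" "\<sigma> = b \<circ>\<^sub>m \<tau>" using L_intro[OF nm s t d[symmetric]] by blast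
    show "\<tau> \<in> green_class (greenL (ORn n) (\<circ>\<^sub>m)) \<sigma>"
      unfolding green_class_iff by (rule greenL_I[OF t s ha(1) hb(1) ha(2) hb(2)])
  qed
qed

lemma R_class:
  assumes nm: "n = 2*m" "m \<ge> 1" and s: "\<sigma> \<in> ORn n"
  shows "green_class (greenR (ORn n) (\<circ>\<^sub>m)) \<sigma> = {\<tau> \<in> ORn n. Jim \<tau> = Jim \<sigma>}"
proof
  show "green_class (greenR (ORn n) (\<circ>\<^sub>m)) \<sigma> \<subseteq> {\<tau> \<in> ORn n. Jim \<tau> = Jim \<sigma>}"
  proof
    fix \<tau> assume "\<tau> \<in> green_class (greenR (ORn n) (\<circ>\<^sub>m)) \<sigma>"
    then have "greenR (ORn n) (\<circ>\<^sub>m) \<tau> \<sigma>" by (simp only: green_class_iff)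
    then obtain a b where t: "\<tau> \<in> ORn n" and e1: "\<tau> = \<sigma> \<circ>\<^sub>m a" and e2: "\<sigma> = \<tau> \<circ>\<^sub>m b"
      by (rule greenR_E)
    have "ran \<tau> \<subseteq> ran \<sigma>" using e1 ran_comp_sub[of \<sigma> a] by simp
    moreover have "ran \<sigma> \<subseteq> ran \<tau>" using e2 ran_comp_sub[of \<tau> b] by simp
    ultimately show "\<tau> \<in> {\<tau> \<in> ORn n. Jim \<tau> = Jim \<sigma>}" using t by (simp add: Jim_def)
  qed
  show "{\<tau> \<in> ORn n. Jim \<tau> = Jim \<sigma>} \<subseteq> green_class (greenR (ORn n) (\<circ>\<^sub>m)) \<sigma>"
  proof
    fix \<tau> assume "\<tau> \<in> {\<tau> \<in> ORn n. Jim \<tau> = Jim \<sigma>}"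
    then have t: "\<tau> \<in> ORn n" and d: "ran \<tau> = ran \<sigma>" by (auto simp: Jim_def)
    obtain a where ha: "a \<in> ORn n" "\<tau> = \<sigma> \<circ>\<^sub>m a" using R_intro[OF nm t s d] by blast
    obtain b where hb: "b \<in> ORn n" "\<sigma> = \<tau> \<circ>\<^sub>m b" using R_intro[OF nm s t d[symmetric]] by blast
    show "\<tau> \<in> green_class (greenR (ORn n) (\<circ>\<^sub>m)) \<sigma>"
      unfolding green_class_iff by (rule greenR_I[OF t s ha(1) hb(1) ha(2) hb(2)])
  qed
qed

lemma H_class:
  assumes nm: "n = 2*m" "m \<ge> 1" and s: "\<sigma> \<in> ORn n"
  shows "green_class (greenH (ORn n) (\<circ>\<^sub>m)) \<sigma> = {\<tau> \<in> ORn n. Idom \<tau> = Idom \<sigma> \<and> Jim \<tau> = Jim \<sigma>}"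
proof -
  have "green_class (greenH (ORn n) (\<circ>\<^sub>m)) \<sigma> =
     green_class (greenL (ORn n) (\<circ>\<^sub>m)) \<sigma> \<inter> green_class (greenR (ORn n) (\<circ>\<^sub>m)) \<sigma>"
    unfolding green_class_def greenH_def by blast
  then show ?thesis using L_class[OF nm s] R_class[OF nm s] by blast
qed

lemma map_comp_assoc': "(f \<circ>\<^sub>m g) \<circ>\<^sub>m h = f \<circ>\<^sub>m (g \<circ>\<^sub>m h)"
proof
  fix i show "((f \<circ>\<^sub>m g) \<circ>\<^sub>m h) i = (f \<circ>\<^sub>m (g \<circ>\<^sub>m h)) i"
    by (cases "h i") (auto simp: map_comp_def)
qed

lemma J_sub:
  assumes nm: "n = 2*m" "m \<ge> 1" and s: "\<sigma> \<in> ORn n"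
  shows "green_class (greenJ (ORn n) (\<circ>\<^sub>m)) \<sigma> \<subseteq>
     {\<tau> \<in> ORn n. rk \<tau> = rk \<sigma> \<and> (rk \<sigma> = m \<longrightarrow> tp n \<tau> = tp n \<sigma>)}"
proof
  fix \<tau> assume "\<tau> \<in> green_class (greenJ (ORn n) (\<circ>\<^sub>m)) \<sigma>"
  then have "greenJ (ORn n) (\<circ>\<^sub>m) \<tau> \<sigma>" by (simp only: green_class_iff)
  then obtain a b c d where t: "\<tau> \<in> ORn n" and ab: "a \<in> ORn n" "b \<in> ORn n" "c \<in> ORn n" "d \<in> ORn n"
    and e1: "\<tau> = (a \<circ>\<^sub>m \<sigma>) \<circ>\<^sub>m b" and e2: "\<sigma> = (c \<circ>\<^sub>m \<tau>) \<circ>\<^sub>m d"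
    by (rule greenJ_E)
  have pt: "pinj n \<tau>" and ps: "pinj n \<sigma>" and pb: "pinj n b" and pd: "pinj n d"
    using ORn_pinj nm t s ab by blast+
  have ft: "finite (dom \<tau>)" and fs: "finite (dom \<sigma>)" using pinj_fin pt ps by blast+
  have ib: "inj_on b (dom b)" and id: "inj_on d (dom d)" using pb pd by (auto simp: pinj_def)
  have f1: "finite (dom (a \<circ>\<^sub>m \<sigma>))" using fs dom_comp_sub[of a \<sigma>] finite_subset by blast
  have f2: "finite (dom (c \<circ>\<^sub>m \<tau>))" using ft dom_comp_sub[of c \<tau>] finite_subset by blast
  have "rk \<tau> \<le> rk (a \<circ>\<^sub>m \<sigma>)" using e1 rk_right[OF f1 ib] by simp
  also have "\<dots> \<le> rk \<sigma>" using rk_left[OF fs] .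
  finally have r1: "rk \<tau> \<le> rk \<sigma>" .
  have "rk \<sigma> \<le> rk (c \<circ>\<^sub>m \<tau>)" using e2 rk_right[OF f2 id] by simp
  also have "\<dots> \<le> rk \<tau>" using rk_left[OF ft] .
  finally have r2: "rk \<sigma> \<le> rk \<tau>" .
  have rr: "rk \<tau> = rk \<sigma>" using r1 r2 by simp
  have "tp n \<tau> = tp n \<sigma>" if "rk \<sigma> = m"
    using J_type[OF nm t s ab(2) dom_comp_sub[of a \<sigma>] e1] rr that by (simp add: tp_def Idom_def)
  then show "\<tau> \<in> {\<tau> \<in> ORn n. rk \<tau> = rk \<sigma> \<and> (rk \<sigma> = m \<longrightarrow> tp n \<tau> = tp n \<sigma>)}"
    using t rr by simp
qed

lemma D_sub_J:
  "green_class (greenD M (\<circ>\<^sub>m)) \<sigma> \<subseteq> green_class (greenJ M (\<circ>\<^sub>m)) \<sigma>"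
proof
  fix \<tau> assume "\<tau> \<in> green_class (greenD M (\<circ>\<^sub>m)) \<sigma>"
  then have "greenD M (\<circ>\<^sub>m) \<tau> \<sigma>" by (simp only: green_class_iff)
  then obtain z where L: "greenL M (\<circ>\<^sub>m) \<tau> z" and R: "greenR M (\<circ>\<^sub>m) z \<sigma>"
    unfolding greenD_def by (elim exE conjE)
  from L obtain a b where t: "\<tau> \<in> M" "z \<in> M" and ab: "a \<in> M" "b \<in> M" and e1: "\<tau> = a \<circ>\<^sub>m z" and e2: "z = b \<circ>\<^sub>m \<tau>"
    by (rule greenL_E)
  from R obtain c d where s: "\<sigma> \<in> M" and cd: "c \<in> M" "d \<in> M" and e3: "z = \<sigma> \<circ>\<^sub>m c" and e4: "\<sigma> = z \<circ>\<^sub>m d"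
    by (rule greenR_E)
  have j1: "\<tau> = (a \<circ>\<^sub>m \<sigma>) \<circ>\<^sub>m c" unfolding e1 e3 map_comp_assoc' ..
  have j2: "\<sigma> = (b \<circ>\<^sub>m \<tau>) \<circ>\<^sub>m d" using e4 unfolding e2 .
  show "\<tau> \<in> green_class (greenJ M (\<circ>\<^sub>m)) \<sigma>"
    unfolding green_class_iff by (rule greenJ_I[OF t(1) s ab(1) cd(1) ab(2) cd(2) j1 j2])
qed

lemma Wprime_ORn: assumes "x \<in> Wprime n" shows "x \<in> ORn n"
proof -
  have "pinj n x" using assms by (simp add: Wprime_def Wgrp_def)
  then show ?thesis using assms unfolding ORn_def by blast
qed

lemma char_sub_D:
  assumes nm: "n = 2*m" "m \<ge> 1" and s: "\<sigma> \<in> ORn n"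
  shows "{\<tau> \<in> ORn n. rk \<tau> = rk \<sigma> \<and> (rk \<sigma> = m \<longrightarrow> tp n \<tau> = tp n \<sigma>)} \<subseteq>
     green_class (greenD (ORn n) (\<circ>\<^sub>m)) \<sigma>"
proof
  fix \<tau> assume "\<tau> \<in> {\<tau> \<in> ORn n. rk \<tau> = rk \<sigma> \<and> (rk \<sigma> = m \<longrightarrow> tp n \<tau> = tp n \<sigma>)}"
  then have t: "\<tau> \<in> ORn n" and rr: "rk \<tau> = rk \<sigma>" and tt: "rk \<sigma> = m \<Longrightarrow> tp n \<tau> = tp n \<sigma>" by auto
  have pt: "pinj n \<tau>" and ps: "pinj n \<sigma>" using ORn_pinj nm t s by blast+
  have ex: "\<exists>z\<in>ORn n. dom z = dom \<tau> \<and> ran z = ran \<sigma>"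
  proof (cases "m < rk \<sigma>")
    case True
    have mt: "m < rk \<tau>" using True rr by simp
    have d1: "dom \<tau> = {1..n}" using ORn_big[OF nm t mt] by (elim conjE)
    have r1: "ran \<sigma> = {1..n}" using ORn_big[OF nm s True] by (elim conjE)
    have wf: "Wfun n id" unfolding Wfun_def by simp
    have "Pm m (id ` {1..m}) = 1" using P_low by simp
    then have "Wp m n id" using wf by (simp add: Wp_def)
    then have w: "tot n id \<in> Wprime n" using Wprime_iff[OF nm(1)] by blast
    then have wg: "tot n id \<in> Wgrp n" unfolding Wprime_def by blast
    have d2: "dom (tot n id) = {1..n}" and r2: "ran (tot n id) = {1..n}"
      using wg unfolding Wgrp_def by blast+
    have o: "tot n id \<in> ORn n" using w by (rule Wprime_ORn)
    show ?thesis
    proof (rule bexI[of _ "tot n id"])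
      show "dom (tot n id) = dom \<tau> \<and> ran (tot n id) = ran \<sigma>" using d1 d2 r1 r2 by simp
    qed (rule o)
  next
    case False
    have c: "card (dom \<tau>) = card (ran \<sigma>)" using rr pinj_card[OF ps] by (simp add: rk_def)
    have dt: "dom \<tau> \<subseteq> {1..n}" and rs: "ran \<sigma> \<subseteq> {1..n}" using pt ps by (simp_all add: pinj_def)
    obtain z where z: "pinj n z" "dom z = dom \<tau>" "ran z = ran \<sigma>"
      by (rule mk_bij_map[OF dt rs c])
    have "z \<in> ORn n"
    proof (rule ORn_mk[OF nm z(1)])
      show "admissible n (dom z)" "admissible n (ran z)" using z ORn_adm[OF nm t] ORn_adm[OF nm s] by auto
      show "typeI n (dom z) = typeI n (ran z)" if "rk z = m"
      proof -
        have "rk \<sigma> = m" "rk \<tau> = m" using that z rr by (auto simp: rk_def)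
        then show ?thesis using tt ORn_m[OF nm s] z by (simp add: tp_def Idom_def)
      qed
      show "z \<in> Wprime n" if "m < rk z" using that False z rr by (simp add: rk_def)
    qed
    then show ?thesis using z by blast
  qed
  then obtain z where z: "z \<in> ORn n" "dom z = dom \<tau>" "ran z = ran \<sigma>" by blast
  have "\<tau> \<in> {\<tau> \<in> ORn n. Idom \<tau> = Idom z}" using t z(2) by (simp add: Idom_def)
  with L_class[OF nm z(1)] have "\<tau> \<in> green_class (greenL (ORn n) (\<circ>\<^sub>m)) z" by (rule ssubst)
  then have "greenL (ORn n) (\<circ>\<^sub>m) \<tau> z" by (simp only: green_class_iff)
  moreover have "z \<in> {\<tau> \<in> ORn n. Jim \<tau> = Jim \<sigma>}" using z(1) z(3) by (simp add: Jim_def)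
  with R_class[OF nm s] have "z \<in> green_class (greenR (ORn n) (\<circ>\<^sub>m)) \<sigma>" by (rule ssubst)
  then have "greenR (ORn n) (\<circ>\<^sub>m) z \<sigma>" by (simp only: green_class_iff)
  ultimately show "\<tau> \<in> green_class (greenD (ORn n) (\<circ>\<^sub>m)) \<sigma>"
    unfolding green_class_iff greenD_def by blast
qed

theorem proposition3p3:
  fixes m n :: nat and \<sigma> :: "nat \<rightharpoonup> nat"
  assumes "m \<ge> 1" and "n = 2 * m" and "\<sigma> \<in> ORn n"
  shows "(green_class (greenL (ORn n) (\<circ>\<^sub>m)) \<sigma> = {\<tau> \<in> ORn n. Idom \<tau> = Idom \<sigma>}) \<and>
      (green_class (greenR (ORn n) (\<circ>\<^sub>m)) \<sigma> = {\<tau> \<in> ORn n. Jim \<tau> = Jim \<sigma>}) \<and>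
      (green_class (greenH (ORn n) (\<circ>\<^sub>m)) \<sigma> =
           {\<tau> \<in> ORn n. Idom \<tau> = Idom \<sigma> \<and> Jim \<tau> = Jim \<sigma>}) \<and>
      (green_class (greenJ (ORn n) (\<circ>\<^sub>m)) \<sigma> =
           {\<tau> \<in> ORn n. rk \<tau> = rk \<sigma> \<and> (rk \<sigma> = m \<longrightarrow> tp n \<tau> = tp n \<sigma>)}) \<and>
      (green_class (greenD (ORn n) (\<circ>\<^sub>m)) \<sigma> = green_class (greenJ (ORn n) (\<circ>\<^sub>m)) \<sigma>)"
proof -
  note nm = assms(2) assms(1)
  have J1: "green_class (greenJ (ORn n) (\<circ>\<^sub>m)) \<sigma> \<subseteq>
     {\<tau> \<in> ORn n. rk \<tau> = rk \<sigma> \<and> (rk \<sigma> = m \<longrightarrow> tp n \<tau> = tp n \<sigma>)}" by (rule J_sub[OF nm assms(3)])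
  have J2: "{\<tau> \<in> ORn n. rk \<tau> = rk \<sigma> \<and> (rk \<sigma> = m \<longrightarrow> tp n \<tau> = tp n \<sigma>)} \<subseteq>
     green_class (greenD (ORn n) (\<circ>\<^sub>m)) \<sigma>" by (rule char_sub_D[OF nm assms(3)])
  have J3: "green_class (greenD (ORn n) (\<circ>\<^sub>m)) \<sigma> \<subseteq> green_class (greenJ (ORn n) (\<circ>\<^sub>m)) \<sigma>"
    by (rule D_sub_J)
  have J4: "green_class (greenJ (ORn n) (\<circ>\<^sub>m)) \<sigma> =
     {\<tau> \<in> ORn n. rk \<tau> = rk \<sigma> \<and> (rk \<sigma> = m \<longrightarrow> tp n \<tau> = tp n \<sigma>)}"
    using J1 J2 J3 by (rule subset_antisym[OF _ subset_trans[OF _ _]])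
  have J5: "green_class (greenD (ORn n) (\<circ>\<^sub>m)) \<sigma> = green_class (greenJ (ORn n) (\<circ>\<^sub>m)) \<sigma>"
    using J3 J2 J4 by simp
  show ?thesis using L_class[OF nm assms(3)] R_class[OF nm assms(3)] H_class[OF nm assms(3)] J4 J5
    by simp
qed

end
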